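(* Let $b>1$, $p\ge1$ and $R\subseteq\{0,\ldots,p-1\}$ be such that $(p,R)$ is proper. Let $k$ be the greatest divisor of $p$ coprime with $b$. If two states $i,i'$ of $\mathcal{A}_{R,p}$ are Nerode-equivalent, then $i\equiv i'\pmod k$.
   Context: $A_b=\{0,\ldots,b-1\}$. $\mathcal{A}_{R,p}$ is the complete deterministic automaton over $A_b$ with states $\{0,\ldots,p-1\}$, initial state $0$, final states $R$, and transitions $n\xrightarrow{a}(nb+a)\bmod p$. The pair $(p,R)$ is proper if $p$ is the smallest period of the purely periodic set $R+p\mathbb{N}$, i.e. there is no $p'<p$, $p'\ge1$, and $R'\subseteq\{0,\ldots,p'-1\}$ with $R+p\mathbb{N}=R'+p'\mathbb{N}$. Two states $s,s'$ are Nerode-equivalent if for every word $u$, $s\cdot u$ is final iff $s'\cdot u$ is final, where $s\cdot u$ is the state reached from $s$ by reading $u$. *)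

theory Defs
  imports Main
begin

text \<open>The automaton A_{R,p} over the alphabet A_b = {0,...,b-1}:
  states {0,...,p-1}, initial state 0, final states R,
  transitions n --a--> (n*b + a) mod p.\<close>

definition aut_step :: "nat \<Rightarrow> nat \<Rightarrow> nat \<Rightarrow> nat \<Rightarrow> nat" where
  "aut_step b p n a = (n * b + a) mod p"

definition aut_run :: "nat \<Rightarrow> nat \<Rightarrow> nat \<Rightarrow> nat list \<Rightarrow> nat" where
  "aut_run b p s u = foldl (aut_step b p) s u"

definition nerode_equiv :: "nat \<Rightarrow> nat \<Rightarrow> nat set \<Rightarrow> nat \<Rightarrow> nat \<Rightarrow> bool" where
  "nerode_equiv b p R s s' \<longleftrightarrow>
     (\<forall>u \<in> lists {0..<b}. (aut_run b p s u \<in> R) \<longleftrightarrow> (aut_run b p s' u \<in> R))"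

definition per_set :: "nat set \<Rightarrow> nat \<Rightarrow> nat set" where
  "per_set R p = {r + p * n | r n. r \<in> R}"

definition proper :: "nat \<Rightarrow> nat set \<Rightarrow> bool" where
  "proper p R \<longleftrightarrow>
     \<not> (\<exists>p' R'. 1 \<le> p' \<and> p' < p \<and> R' \<subseteq> {0..<p'} \<and> per_set R p = per_set R' p')"

end

theory Submission
  imports Defs "HOL-Number_Theory.Cong"
begin

definition dval :: "nat \<Rightarrow> nat list \<Rightarrow> nat" where
  "dval b u = foldl (\<lambda>v a. v * b + a) 0 u"

lemma run_eq: "s < p \<Longrightarrow> aut_run b p s u = (s * b ^ length u + dval b u) mod p"
proof (induction u rule: rev_induct)
  case Nil then show ?case by (simp add: aut_run_def dval_def)
next
  case (snoc a u)
  have "aut_run b p s (u @ [a]) = (aut_run b p s u * b + a) mod p"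
    by (simp add: aut_run_def aut_step_def)
  also have "\<dots> = (((s * b ^ length u + dval b u) mod p) * b + a) mod p" using snoc by simp
  also have "\<dots> = ((s * b ^ length u + dval b u) * b + a) mod p"
    by (metis mod_add_left_eq mod_mult_left_eq)
  also have "\<dots> = (s * b ^ length (u @ [a]) + dval b (u @ [a])) mod p"
    by (simp add: dval_def algebra_simps)
  finally show ?case .
qed

lemma dval_surj: "0 < b \<Longrightarrow> v < b ^ n \<Longrightarrow> \<exists>u \<in> lists {0..<b}. length u = n \<and> dval b u = v"
proof (induction n arbitrary: v)
  case 0 then show ?case by (auto simp: dval_def)
next
  case (Suc n)
  have "v div b < b ^ n" using Suc.prems
    by (metis div_less_iff_less_mult mult.commute power_Suc)
  then obtain u where u: "u \<in> lists {0..<b}" "length u = n" "dval b u = v div b"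
    using Suc by blast
  show ?case
  proof (intro bexI conjI)
    show "u @ [v mod b] \<in> lists {0..<b}" using u Suc.prems by auto
    show "length (u @ [v mod b]) = Suc n" using u by simp
    show "dval b (u @ [v mod b]) = v" using u by (simp add: dval_def)
  qed
qed

lemma iter_per:
  fixes P :: "nat \<Rightarrow> bool" and x d y :: nat
  assumes "\<And>x. P x = P (x + d)"
  shows "P x = P (x + d * y)"
proof (induction y)
  case 0 then show ?case by simp
next
  case (Suc y)
  have "x + d * Suc y = (x + d * y) + d" by simp
  then show ?case using assms[of "x + d * y"] Suc by metis
qed

theorem proposition20:
  fixes b p k i i' :: nat and R :: "nat set"
  assumes "b > 1" and "p \<ge> 1"
    and "R \<subseteq> {0..<p}"
    and "proper p R"
    and "k = (GREATEST d. d dvd p \<and> coprime d b)"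
    and "i < p" and "i' < p"
    and "nerode_equiv b p R i i'"
  shows "i mod k = i' mod k"
proof -
  have kP: "k dvd p \<and> coprime k b"
    unfolding assms(5)
    by (rule GreatestI_nat[where k=1 and b=p]) (use assms(2) in \<open>auto intro: dvd_imp_le\<close>)
  define N where "N = b ^ p"
  have Np: "p \<le> N" unfolding N_def
  proof -
    have "p < 2 ^ p" by (rule less_exp)
    also have "(2::nat) ^ p \<le> b ^ p" using assms(1) by (intro power_mono) auto
    finally show "p \<le> b ^ p" by simp
  qed
  define P where "P x = (x mod p \<in> R)" for x
  have Pp: "P x = P (x + p)" for x by (simp add: P_def)
  define t where "t = i * N mod p"
  define t' where "t' = i' * N mod p"
  have tp: "t < p" "t' < p" using assms(2) by (auto simp: t_def t'_def)
  have key: "P (t + v) = P (t' + v)" for v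
  proof -
    have "v mod p < N" using Np assms(2) by (meson mod_less_divisor less_le_trans zero_less_one)
    then obtain u where u: "u \<in> lists {0..<b}" "length u = p" "dval b u = v mod p"
      using dval_surj[of b "v mod p" p] assms(1) N_def by auto
    have "(aut_run b p i u \<in> R) = (aut_run b p i' u \<in> R)"
      using assms(8) u(1) unfolding nerode_equiv_def by blast
    moreover have "aut_run b p i u = (t + v) mod p"
      unfolding run_eq[OF assms(6)] u t_def N_def by (metis mod_add_eq mod_mod_trivial)
    moreover have "aut_run b p i' u = (t' + v) mod p"
      unfolding run_eq[OF assms(7)] u t'_def N_def by (metis mod_add_eq mod_mod_trivial)
    ultimately show ?thesis by (simp add: P_def)
  qed
  have teq: "t = t'"
  proof (rule ccontr)
    assume ne: "t \<noteq> t'"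
    obtain a c where ac: "{a, c} = {t, t'}" "a < c" using ne
      by (metis insert_commute linorder_neqE_nat)
    have key2: "P (a + v) = P (c + v)" for v
      using ac key[of v] by (auto simp: doubleton_eq_iff)
    have acp: "a < p" "c < p" using ac tp by (auto simp: doubleton_eq_iff)
    define d where "d = c - a"
    have d: "0 < d" "d < p" using ac acp by (auto simp: d_def)
    have Pd: "P x = P (x + d)" for x
    proof -
      have "P x = P (x + p)" by (rule Pp)
      also have "\<dots> = P (a + (x + p - a))" using acp by simp
      also have "\<dots> = P (c + (x + p - a))" by (rule key2)
      also have "c + (x + p - a) = (x + d) + p" using acp ac by (simp add: d_def)
      also have "P \<dots> = P (x + d)" using Pp by simp
      finally show ?thesis .
    qed
    define g where "g = gcd d p"
    obtain x y where xy: "d * x = p * y + g"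
      using bezout_nat[of d p] d unfolding g_def by (auto simp: gcd.commute)
    have Pg: "P z = P (z + g)" for z
    proof -
      have 2: "P z = P (z + d * x)"
        using iter_per[of P d z x] Pd by simp
      have 3: "z + d * x = (z + g) + p * y"  using xy by simp
      have 4: "P ((z + g) + p * y) = P (z + g)" using iter_per[of P p "z + g" y] Pp by simp
      show ?thesis using 2 3 4 by simp
    qed
    have g: "1 \<le> g" "g < p"
    proof -
      show "1 \<le> g" using d by (simp add: g_def Suc_le_eq)
      have "g \<le> d" unfolding g_def using d by (simp add: gcd_le1_nat)
      then show "g < p" using d by simp
    qed
    have Pmod: "P z = P (z mod g)" for z
    proof -
      have "P (z mod g) = P (z mod g + g * (z div g))"
        using iter_per[of P g "z mod g" "z div g"] Pg by simp
      then show ?thesis by simp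
    qed
    define R' where "R' = {r. r < g \<and> P r}"
    have "per_set R p = {x. P x}"
    proof (intro set_eqI iffI)
      fix x assume "x \<in> per_set R p"
      then obtain r n where "x = r + p * n" "r \<in> R" unfolding per_set_def by auto
      then show "x \<in> {x. P x}" using assms(3) by (auto simp: P_def)
    next
      fix x assume "x \<in> {x. P x}"
      then have "x mod p \<in> R" by (simp add: P_def)
      moreover have "x = x mod p + p * (x div p)" by simp
      ultimately show "x \<in> per_set R p" unfolding per_set_def by blast
    qed
    moreover have "per_set R' g = {x. P x}"
    proof (intro set_eqI iffI)
      fix x assume "x \<in> per_set R' g"
      then obtain r n where rn: "x = r + g * n" "r \<in> R'" unfolding per_set_def by auto
      then have "r < g" "P r" by (auto simp: R'_def)
      then have "x mod g = r" using rn(1) by simp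
      then show "x \<in> {x. P x}" using Pmod[of x] \<open>P r\<close> by simp
    next
      fix x assume "x \<in> {x. P x}"
      then have "x mod g \<in> R'" using Pmod[of x] g by (simp add: R'_def)
      moreover have "x = x mod g + g * (x div g)" by simp
      ultimately show "x \<in> per_set R' g" unfolding per_set_def by blast
    qed
    moreover have "R' \<subseteq> {0..<g}" by (auto simp: R'_def)
    ultimately show False using assms(4) g unfolding proper_def by blast
  qed
  have "[i * N = i' * N] (mod p)" using teq by (simp add: t_def t'_def cong_def)
  then have "[i * N = i' * N] (mod k)" using kP by (meson cong_dvd_modulus_nat)
  moreover have "coprime N k" using kP by (simp add: N_def ac_simps)
  ultimately have "[i = i'] (mod k)" by (metis cong_mult_rcancel_nat)
  then show ?thesis by (simp add: cong_def)
qed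

end
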